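(* With the setting of the conformal-gauge Dirac bracket (constraints $\vec x\cdot\vec p=0$, $|\vec x|^2=|\vec p|^2$, $\vec x\wedge\vec p\ne0$, Dirac bracket $\{\cdot,\cdot\}_D$, and $\mathcal N=|\vec J|$, $\vec J=\vec x\wedge\vec p$, $\vec K=|\vec x|\vec x$, $\vec L=|\vec p|\vec p$), define on the constraint surface the complex functions $$w_0=K_-+iL_-=(|\vec x|p_2+|\vec p|x_1)-i(|\vec p|x_2-|\vec x|p_1),\qquad w_1=-(K_++iL_+),$$ where $K_\pm=K_1\pm iK_2$, $L_\pm=L_1\pm iL_2$. Then $|w_0|=\mathcal N+J_3$, $|w_1|=\mathcal N-J_3$, and $$\{w_0,w_1\}_D=0,\quad \{w_0,\bar w_1\}_D=0,\quad \{w_0,\bar w_0\}_D=-4i(\mathcal N+J_3),\quad \{w_1,\bar w_1\}_D=-4i(\mathcal N-J_3).$$ Consequently, if $(z_0,z_1)$ are (locally defined) square roots with $z_A^2=w_A$, then $\frac12(|z_0|^2+|z_1|^2)=\mathcal N$, $\frac12(|z_0|^2-|z_1|^2)=J_3$, and these brackets are those of canonical spinor variables with $\{z_A,\bar z_B\}=-i\delta_{AB}$, $\{z_A,z_B\}=0$. *)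

theory Defs
  imports "HOL-Analysis.Analysis" "HOL-Analysis.Cross3"
begin

type_synonym obs = "real^3 \<Rightarrow> real^3 \<Rightarrow> complex"

definition dX :: "3 \<Rightarrow> obs \<Rightarrow> obs" where
  "dX i f x p = vector_derivative (\<lambda>t. f (x + t *\<^sub>R axis i 1) p) (at 0)"

definition dP :: "3 \<Rightarrow> obs \<Rightarrow> obs" where
  "dP i f x p = vector_derivative (\<lambda>t. f x (p + t *\<^sub>R axis i 1)) (at 0)"

definition PB :: "obs \<Rightarrow> obs \<Rightarrow> obs" where
  "PB f g x p = (\<Sum>i\<in>UNIV. dX i f x p * dP i g x p - dP i f x p * dX i g x p)"

definition phi1 :: obs where "phi1 x p = complex_of_real (x \<bullet> p)"
definition phi2 :: obs where "phi2 x p = complex_of_real (norm x ^ 2 - norm p ^ 2)"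

text \<open>Dirac bracket for the two second-class constraints:
  {f,g}_D = {f,g} - sum_{a,b} {f,phi_a} (C^{-1})_{ab} {phi_b,g}, with C_{ab} = {phi_a,phi_b};
  the inverse of the 2x2 matrix C is written out explicitly.\<close>

definition DB :: "obs \<Rightarrow> obs \<Rightarrow> obs" where
  "DB f g x p =
     (let phi = (\<lambda>a::nat. if a = 0 then phi1 else phi2);
          C = (\<lambda>a b. PB (phi a) (phi b) x p);
          d = C 0 0 * C 1 1 - C 0 1 * C 1 0;
          Cinv = (\<lambda>a b. (if a = 0 \<and> b = 0 then C 1 1
                        else if a = 1 \<and> b = 1 then C 0 0
                        else - C a b) / d)
      in PB f g x p - (\<Sum>a\<in>{0,1}. \<Sum>b\<in>{0,1}. PB f (phi a) x p * Cinv a b * PB (phi b) g x p))"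

definition cnjf :: "obs \<Rightarrow> obs" where "cnjf f x p = cnj (f x p)"

definition onConstraint :: "real^3 \<Rightarrow> real^3 \<Rightarrow> bool" where
  "onConstraint x p \<longleftrightarrow> x \<bullet> p = 0 \<and> norm x ^ 2 = norm p ^ 2 \<and> cross3 x p \<noteq> 0"

definition Jv :: "real^3 \<Rightarrow> real^3 \<Rightarrow> real^3" where "Jv x p = cross3 x p"
definition NN :: "real^3 \<Rightarrow> real^3 \<Rightarrow> real" where "NN x p = norm (Jv x p)"
definition Kv :: "real^3 \<Rightarrow> real^3 \<Rightarrow> real^3" where "Kv x p = norm x *\<^sub>R x"
definition Lv :: "real^3 \<Rightarrow> real^3 \<Rightarrow> real^3" where "Lv x p = norm p *\<^sub>R p"

definition Kplus :: obs where "Kplus x p = Complex (Kv x p $ 1) (Kv x p $ 2)"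
definition Kminus :: obs where "Kminus x p = Complex (Kv x p $ 1) (- (Kv x p $ 2))"
definition Lplus :: obs where "Lplus x p = Complex (Lv x p $ 1) (Lv x p $ 2)"
definition Lminus :: obs where "Lminus x p = Complex (Lv x p $ 1) (- (Lv x p $ 2))"

definition w0 :: obs where "w0 x p = Kminus x p + \<i> * Lminus x p"
definition w1 :: obs where "w1 x p = - (Kplus x p + \<i> * Lplus x p)"

end

theory Submission
  imports Defs
begin


lemma deriv_norm_dir:
  fixes x :: "real^3"
  assumes "x \<noteq> 0"
  shows "((\<lambda>t. norm (x + t *\<^sub>R axis i 1)) has_real_derivative (x $ i / norm x)) (at 0)"
proof -
  have d: "(norm has_derivative (\<lambda>h. h \<bullet> sgn x)) (at x)"
    using has_derivative_norm[OF assms] .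
  have l: "((\<lambda>t::real. x + t *\<^sub>R axis i 1) has_derivative (\<lambda>t. t *\<^sub>R axis i (1::real))) (at 0)"
    by (auto intro!: derivative_eq_intros)
  have "((\<lambda>t. norm (x + t *\<^sub>R axis i 1)) has_derivative (\<lambda>t. (t *\<^sub>R axis i 1) \<bullet> sgn x)) (at 0)"
  proof -
    have d': "(norm has_derivative (\<lambda>h. h \<bullet> sgn x)) (at ((\<lambda>t::real. x + t *\<^sub>R axis i 1) 0))"
      using d by simp
    show ?thesis by (rule has_derivative_compose[OF l d'])
  qed
  moreover have "(\<lambda>t. (t *\<^sub>R axis i 1) \<bullet> sgn x) = (\<lambda>t. (x $ i / norm x) * t)"
    by (auto simp: sgn_div_norm inner_axis' divide_inverse)
  ultimately show ?thesis unfolding has_field_derivative_def by metis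
qed

lemma deriv_comp_dir:
  fixes x :: "real^3"
  shows "((\<lambda>t. (x + t *\<^sub>R axis i 1) $ j) has_real_derivative (axis i 1 $ j)) (at 0)"
proof -
  have "(\<lambda>t. (x + t *\<^sub>R axis i 1) $ j) = (\<lambda>t. x $ j + t * (axis i 1 $ j))" by auto
  then show ?thesis by (auto intro!: derivative_eq_intros)
qed

lemma vd_Complex:
  assumes "(A has_real_derivative A') (at 0)" "(B has_real_derivative B') (at 0)"
  shows "((\<lambda>t. Complex (A t) (B t)) has_vector_derivative Complex A' B') (at 0)"
  using assms by (simp add: has_vector_derivative_complex_iff)

lemma w0_eq: "w0 x p = Complex (norm x * x$1 + norm p * p$2) (norm p * p$1 - norm x * x$2)"
  by (simp add: w0_def Kminus_def Lminus_def Kv_def Lv_def complex_eq_iff)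
lemma w1_eq: "w1 x p = Complex (norm p * p$2 - norm x * x$1) (- (norm x * x$2 + norm p * p$1))"
  by (simp add: w1_def Kplus_def Lplus_def Kv_def Lv_def complex_eq_iff)

lemma dX_intro: "((\<lambda>t. f (x + t *\<^sub>R axis i 1) p) has_vector_derivative D) (at 0) \<Longrightarrow> dX i f x p = D"
  by (simp add: dX_def vector_derivative_at)
lemma dP_intro: "((\<lambda>t. f x (p + t *\<^sub>R axis i 1)) has_vector_derivative D) (at 0) \<Longrightarrow> dP i f x p = D"
  by (simp add: dP_def vector_derivative_at)



lemma hX_w0: assumes "x \<noteq> 0"
  shows "((\<lambda>t. w0 (x + t *\<^sub>R axis i 1) p) has_vector_derivative
     Complex (x$i / norm x * x$1 + norm x * axis i 1 $ 1) (- (x$i / norm x * x$2 + norm x * axis i 1 $ 2))) (at 0)"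
  unfolding w0_eq by (auto intro!: vd_Complex derivative_eq_intros deriv_norm_dir[OF assms] deriv_comp_dir simp: field_simps assms)
lemma hP_w0: assumes "p \<noteq> 0"
  shows "((\<lambda>t. w0 x (p + t *\<^sub>R axis i 1)) has_vector_derivative
     Complex (p$i / norm p * p$2 + norm p * axis i 1 $ 2) (p$i / norm p * p$1 + norm p * axis i 1 $ 1)) (at 0)"
  unfolding w0_eq by (auto intro!: vd_Complex derivative_eq_intros deriv_norm_dir[OF assms] deriv_comp_dir simp: field_simps assms)
lemma hX_w1: assumes "x \<noteq> 0"
  shows "((\<lambda>t. w1 (x + t *\<^sub>R axis i 1) p) has_vector_derivative
     Complex (- (x$i / norm x * x$1 + norm x * axis i 1 $ 1)) (- (x$i / norm x * x$2 + norm x * axis i 1 $ 2))) (at 0)"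
  unfolding w1_eq by (auto intro!: vd_Complex derivative_eq_intros deriv_norm_dir[OF assms] deriv_comp_dir simp: field_simps assms)
lemma hP_w1: assumes "p \<noteq> 0"
  shows "((\<lambda>t. w1 x (p + t *\<^sub>R axis i 1)) has_vector_derivative
     Complex (p$i / norm p * p$2 + norm p * axis i 1 $ 2) (- (p$i / norm p * p$1 + norm p * axis i 1 $ 1))) (at 0)"
  unfolding w1_eq by (auto intro!: vd_Complex derivative_eq_intros deriv_norm_dir[OF assms] deriv_comp_dir simp: field_simps assms)

lemma phi1_eq: "phi1 x p = Complex (x$1*p$1 + x$2*p$2 + x$3*p$3) 0"
  by (simp add: phi1_def inner_vec_def sum_3 complex_eq_iff)
lemma phi2_eq: "phi2 x p = Complex (norm x ^ 2 - norm p ^ 2) 0"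
  by (simp add: phi2_def complex_eq_iff)

lemma hX_phi1: "((\<lambda>t. phi1 (x + t *\<^sub>R axis i 1) p) has_vector_derivative Complex (p $ i) 0) (at 0)"
proof -
  have "p $ i = axis i 1 $ 1 * p$1 + axis i 1 $ 2 * p$2 + axis i 1 $ 3 * p$3"
    using exhaust_3[of i] by (auto simp: axis_def)
  note e = this
  show ?thesis unfolding phi1_eq
    by (auto intro!: vd_Complex derivative_eq_intros deriv_comp_dir simp: e algebra_simps)
qed
lemma hP_phi1: "((\<lambda>t. phi1 x (p + t *\<^sub>R axis i 1)) has_vector_derivative Complex (x $ i) 0) (at 0)"
proof -
  have "x $ i = axis i 1 $ 1 * x$1 + axis i 1 $ 2 * x$2 + axis i 1 $ 3 * x$3"
    using exhaust_3[of i] by (auto simp: axis_def)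
  note e = this
  show ?thesis unfolding phi1_eq
    by (auto intro!: vd_Complex derivative_eq_intros deriv_comp_dir simp: e algebra_simps)
qed
lemma hX_phi2: assumes "x \<noteq> 0"
  shows "((\<lambda>t. phi2 (x + t *\<^sub>R axis i 1) p) has_vector_derivative Complex (2 * x $ i) 0) (at 0)"
  unfolding phi2_eq by (auto intro!: vd_Complex derivative_eq_intros deriv_norm_dir[OF assms] deriv_comp_dir simp: field_simps assms)
lemma hP_phi2: assumes "p \<noteq> 0"
  shows "((\<lambda>t. phi2 x (p + t *\<^sub>R axis i 1)) has_vector_derivative Complex (- 2 * p $ i) 0) (at 0)"
  unfolding phi2_eq by (auto intro!: vd_Complex derivative_eq_intros deriv_norm_dir[OF assms] deriv_comp_dir simp: field_simps assms)

lemma hcnj: "((\<lambda>t. f (y t) (q t)) has_vector_derivative D) (at 0) \<Longrightarrow>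
   ((\<lambda>t. cnjf f (y t) (q t)) has_vector_derivative cnj D) (at 0)"
  unfolding cnjf_def by (rule has_vector_derivative_cnj)

lemma PB_self: "PB f f x p = 0"
  by (simp add: PB_def mult.commute)
lemma PB_anti: "PB g f x p = - PB f g x p"
  by (simp add: PB_def sum_negf[symmetric] algebra_simps)

lemma DB_formula:
  assumes "PB phi1 phi2 x p \<noteq> 0"
  shows "DB f g x p = PB f g x p + (PB f phi1 x p * PB phi2 g x p - PB f phi2 x p * PB phi1 g x p) / PB phi1 phi2 x p"
  using assms unfolding DB_def Let_def
  by (simp add: PB_self PB_anti[of phi2 phi1] field_simps power2_eq_square)

lemma axis3: "axis (1::3) (1::real) $ 1 = 1" "axis (1::3) (1::real) $ 2 = 0" "axis (1::3) (1::real) $ 3 = 0"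
  "axis (2::3) (1::real) $ 1 = 0" "axis (2::3) (1::real) $ 2 = 1" "axis (2::3) (1::real) $ 3 = 0"
  "axis (3::3) (1::real) $ 1 = 0" "axis (3::3) (1::real) $ 2 = 0" "axis (3::3) (1::real) $ 3 = 1"
  by (simp_all add: axis_def)



lemma hXc: "((\<lambda>t. f (x + t *\<^sub>R axis i 1) p) has_vector_derivative D) (at 0) \<Longrightarrow>
   ((\<lambda>t. cnjf f (x + t *\<^sub>R axis i 1) p) has_vector_derivative cnj D) (at 0)"
  unfolding cnjf_def by (rule has_vector_derivative_cnj)
lemma hPc: "((\<lambda>t. f x (p + t *\<^sub>R axis i 1)) has_vector_derivative D) (at 0) \<Longrightarrow>
   ((\<lambda>t. cnjf f x (p + t *\<^sub>R axis i 1)) has_vector_derivative cnj D) (at 0)"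
  unfolding cnjf_def by (rule has_vector_derivative_cnj)

lemma bracks:
  fixes x p :: "real^3"
  assumes xnz: "x \<noteq> 0" and pnz: "p \<noteq> 0" and np: "norm p = norm x"
    and xp: "x$1*p$1+x$2*p$2+x$3*p$3 = 0"
    and nx: "norm x ^2 = x$1^2+x$2^2+x$3^2" and npp: "norm x ^2 = p$1^2+p$2^2+p$3^2"
  shows "DB w0 w1 x p = 0" "DB w0 (cnjf w1) x p = 0" "DB w1 (cnjf w0) x p = 0"
    "DB w0 (cnjf w0) x p = - 4 * \<i> * of_real (norm x ^ 2 + (x$1*p$2 - x$2*p$1))"
    "DB w1 (cnjf w1) x p = - 4 * \<i> * of_real (norm x ^ 2 - (x$1*p$2 - x$2*p$1))"
    "DB w0 w0 x p = 0" "DB w1 w1 x p = 0" "DB w1 w0 x p = 0"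
proof -
  note d = dX_intro[OF hX_w0[OF xnz]] dP_intro[OF hP_w0[OF pnz]]
     dX_intro[OF hX_w1[OF xnz]] dP_intro[OF hP_w1[OF pnz]]
     dX_intro[OF hX_phi1] dP_intro[OF hP_phi1]
     dX_intro[OF hX_phi2[OF xnz]] dP_intro[OF hP_phi2[OF pnz]]
     dX_intro[OF hXc[OF hX_w0[OF xnz]]] dP_intro[OF hPc[OF hP_w0[OF pnz]]]
     dX_intro[OF hXc[OF hX_w1[OF xnz]]] dP_intro[OF hPc[OF hP_w1[OF pnz]]]
  have nxz: "norm x \<noteq> 0" using xnz by simp
  define ri where "ri = inverse (norm x)"
  have ri1: "ri * norm x = 1" using nxz by (simp add: ri_def)
  have divr: "\<And>t. t / norm x = t * ri" by (simp add: ri_def divide_inverse)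
  have C: "PB phi1 phi2 x p = - 4 * of_real (norm x ^ 2)"
    apply (simp add: PB_def sum_3 d axis3 complex_eq_iff)
    using nx npp unfolding power2_eq_square by linarith
  have A0: "PB w0 phi1 x p = 2 * of_real (norm x) * Complex (x$1 - p$2) (- (x$2 + p$1))"
    apply (simp add: PB_def sum_3 d axis3 complex_eq_iff np divr)
    using nx npp xp ri1 by ((rule conjI)?; algebra)
  have B0: "PB w0 phi2 x p = -2 * of_real (norm x) * Complex (p$1 + x$2) (x$1 - p$2)"
    apply (simp add: PB_def sum_3 d axis3 complex_eq_iff np divr)
    using nx npp xp ri1 by ((rule conjI)?; algebra)
  have A1: "PB w1 phi1 x p = -2 * of_real (norm x) * Complex (x$1 + p$2) (x$2 - p$1)"
    apply (simp add: PB_def sum_3 d axis3 complex_eq_iff np divr)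
    using nx npp xp ri1 by ((rule conjI)?; algebra)
  have B1: "PB w1 phi2 x p = -2 * of_real (norm x) * Complex (x$2 - p$1) (- (x$1 + p$2))"
    apply (simp add: PB_def sum_3 d axis3 complex_eq_iff np divr)
    using nx npp xp ri1 by ((rule conjI)?; algebra)
  have cA0: "PB (cnjf w0) phi1 x p = 2 * of_real (norm x) * Complex (x$1 - p$2) (x$2 + p$1)"
    apply (simp add: PB_def sum_3 d axis3 complex_eq_iff np divr)
    using nx npp xp ri1 by ((rule conjI)?; algebra)
  have cB0: "PB (cnjf w0) phi2 x p = -2 * of_real (norm x) * Complex (p$1 + x$2) (p$2 - x$1)"
    apply (simp add: PB_def sum_3 d axis3 complex_eq_iff np divr)
    using nx npp xp ri1 by ((rule conjI)?; algebra)
  have cA1: "PB (cnjf w1) phi1 x p = -2 * of_real (norm x) * Complex (x$1 + p$2) (p$1 - x$2)"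
    apply (simp add: PB_def sum_3 d axis3 complex_eq_iff np divr)
    using nx npp xp ri1 by ((rule conjI)?; algebra)
  have cB1: "PB (cnjf w1) phi2 x p = -2 * of_real (norm x) * Complex (x$2 - p$1) (x$1 + p$2)"
    apply (simp add: PB_def sum_3 d axis3 complex_eq_iff np divr)
    using nx npp xp ri1 by ((rule conjI)?; algebra)
  have Cnz: "PB phi1 phi2 x p \<noteq> 0" using C nxz by simp
  have Cinv: "\<And>z. z / PB phi1 phi2 x p = z * of_real (ri*ri) * (-1/4)"
    using nxz unfolding C ri_def by (simp add: field_simps power2_eq_square of_real_inverse[symmetric] del: of_real_inverse)
  have DBf: "DB f g x p = PB f g x p + (PB g phi1 x p * PB f phi2 x p - PB f phi1 x p * PB g phi2 x p) * of_real (ri*ri) * (-1/4)" for f g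
    unfolding DB_formula[OF Cnz] Cinv PB_anti[of phi2 g] PB_anti[of phi1 g] by (simp add: algebra_simps)
  note ab = A0 B0 A1 B1 cA0 cB0 cA1 cB1
  show "DB w0 w0 x p = 0" "DB w1 w1 x p = 0" by (simp_all add: DBf PB_self)
  have "DB w1 w0 x p = - DB w0 w1 x p" by (simp add: DBf PB_anti[of w1 w0] algebra_simps)
  moreover show "DB w0 w1 x p = 0"
    apply (simp only: DBf ab)
    apply (simp add: PB_def sum_3 d axis3 complex_eq_iff np divr)
    using nx npp xp ri1 by ((rule conjI)?; algebra)
  ultimately show "DB w1 w0 x p = 0" by simp
  show "DB w0 (cnjf w1) x p = 0"
    apply (simp only: DBf ab)
    apply (simp add: PB_def sum_3 d axis3 complex_eq_iff np divr)
    using nx npp xp ri1 by ((rule conjI)?; algebra)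
  show "DB w1 (cnjf w0) x p = 0"
    apply (simp only: DBf ab)
    apply (simp add: PB_def sum_3 d axis3 complex_eq_iff np divr)
    using nx npp xp ri1 by ((rule conjI)?; algebra)
  show "DB w0 (cnjf w0) x p = - 4 * \<i> * of_real (norm x ^ 2 + (x$1*p$2 - x$2*p$1))"
    apply (simp only: DBf ab)
    apply (simp add: PB_def sum_3 d axis3 complex_eq_iff np divr)
    using nx npp xp ri1 by ((rule conjI)?; algebra)
  show "DB w1 (cnjf w1) x p = - 4 * \<i> * of_real (norm x ^ 2 - (x$1*p$2 - x$2*p$1))"
    apply (simp only: DBf ab)
    apply (simp add: PB_def sum_3 d axis3 complex_eq_iff np divr)
    using nx npp xp ri1 by ((rule conjI)?; algebra)
qed


lemma vd_quot:
  fixes W :: "real \<Rightarrow> complex"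
  assumes "(W has_vector_derivative W') (at 0)"
  shows "((\<lambda>h. (W h - W 0) / of_real h) \<longlongrightarrow> W') (at 0)"
proof -
  have r: "((\<lambda>h. (Re (W (0 + h)) - Re (W 0)) / h) \<longlongrightarrow> Re W') (at 0)"
    and i: "((\<lambda>h. (Im (W (0 + h)) - Im (W 0)) / h) \<longlongrightarrow> Im W') (at 0)"
    using assms by (simp_all only: has_vector_derivative_complex_iff DERIV_def)
  have "((\<lambda>h. Complex ((Re (W (0 + h)) - Re (W 0)) / h) ((Im (W (0 + h)) - Im (W 0)) / h))
      \<longlongrightarrow> Complex (Re W') (Im W')) (at 0)"
    by (rule tendsto_Complex[OF r i])
  moreover have "(\<lambda>h. Complex ((Re (W (0 + h)) - Re (W 0)) / h) ((Im (W (0 + h)) - Im (W 0)) / h))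
     = (\<lambda>h. (W h - W 0) / of_real h)"
    by (auto simp: complex_eq_iff Re_divide_of_real Im_divide_of_real)
  ultimately show ?thesis by simp
qed

lemma sqrt_vd:
  fixes W g :: "real \<Rightarrow> complex"
  assumes W: "(W has_vector_derivative W') (at 0)" and cont: "continuous (at 0) g"
    and ev: "eventually (\<lambda>t. g t ^ 2 = W t) (nhds 0)" and nz: "g 0 \<noteq> 0"
  shows "(g has_vector_derivative W' / (2 * g 0)) (at 0)"
proof -
  have q: "((\<lambda>h. (W h - W 0) / of_real h) \<longlongrightarrow> W') (at 0)" by (rule vd_quot[OF W])
  have gc: "(g \<longlongrightarrow> g 0) (at 0)" using cont by (simp add: continuous_at)
  have den: "((\<lambda>h. g h + g 0) \<longlongrightarrow> 2 * g 0) (at 0)"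
    using tendsto_add[OF gc tendsto_const[of "g 0"]] by (metis mult_2)
  have nz2: "2 * g 0 \<noteq> 0" using nz by simp
  have W0: "g 0 ^ 2 = W 0" using eventually_nhds_x_imp_x[OF ev] .
  have e1: "eventually (\<lambda>h. g h + g 0 \<noteq> 0) (at 0)" by (rule tendsto_imp_eventually_ne[OF den nz2])
  have e2: "eventually (\<lambda>h. g h ^ 2 = W h) (at 0)"
    using ev by (simp add: eventually_at_filter eventually_mono)
  have e3: "eventually (\<lambda>h. ((W h - W 0) / of_real h) / (g h + g 0) = (g h - g 0) / of_real h) (at 0)"
    using e1 e2
  proof eventually_elim
    case (elim h)
    have eq: "W h - W 0 = (g h - g 0) * (g h + g 0)"
      using W0 elim(2) by (simp add: power2_eq_square algebra_simps)
    have "((W h - W 0) / of_real h) / (g h + g 0) = ((g h - g 0) * (g h + g 0)) / (of_real h * (g h + g 0))"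
      by (simp only: eq divide_divide_eq_left)
    also have "\<dots> = (g h - g 0) / of_real h"
      by (rule nonzero_mult_divide_mult_cancel_right[OF elim(1)])
    finally show ?case .
  qed
  have lim: "((\<lambda>h. (g h - g 0) / of_real h) \<longlongrightarrow> W' / (2 * g 0)) (at 0)"
    using Lim_transform_eventually[OF tendsto_divide[OF q den nz2] e3] .
  have lr: "((\<lambda>h. (Re (g (0 + h)) - Re (g 0)) / h) \<longlongrightarrow> Re (W' / (2 * g 0))) (at 0)"
    using tendsto_Re[OF lim] by (simp add: Re_divide_of_real)
  have li: "((\<lambda>h. (Im (g (0 + h)) - Im (g 0)) / h) \<longlongrightarrow> Im (W' / (2 * g 0))) (at 0)"
    using tendsto_Im[OF lim] by (simp add: Im_divide_of_real)
  show ?thesis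
    unfolding has_vector_derivative_complex_iff DERIV_def using lr li by simp
qed

lemma PB_scale_left:
  assumes "\<And>i. dX i f x p = c * dX i F x p" "\<And>i. dP i f x p = c * dP i F x p"
  shows "PB f h x p = c * PB F h x p"
  unfolding PB_def assms sum_distrib_left by (simp add: algebra_simps)
lemma PB_scale_right:
  assumes "\<And>i. dX i f x p = c * dX i F x p" "\<And>i. dP i f x p = c * dP i F x p"
  shows "PB h f x p = c * PB h F x p"
  unfolding PB_def assms sum_distrib_left by (simp add: algebra_simps)

lemma DB_scale:
  assumes "\<And>i. dX i f x p = c * dX i F x p" "\<And>i. dP i f x p = c * dP i F x p"
    "\<And>i. dX i g x p = e * dX i G x p" "\<And>i. dP i g x p = e * dP i G x p"
  shows "DB f g x p = c * e * DB F G x p"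
  unfolding DB_def Let_def PB_scale_left[of f x p c F, OF assms(1,2)] PB_scale_right[of g x p e G, OF assms(3,4)]
  by (simp add: algebra_simps)


lemma path_sqrt:
  fixes F W :: "'a::t2_space \<Rightarrow> complex" and \<gamma> :: "real \<Rightarrow> 'a"
  assumes U: "open U" "\<gamma> 0 \<in> U" and gc: "continuous (at 0) \<gamma>" and Fc: "continuous_on U F"
    and sq: "\<forall>u\<in>U. F u ^ 2 = W u" and nz: "F (\<gamma> 0) \<noteq> 0"
    and D: "((\<lambda>t. W (\<gamma> t)) has_vector_derivative D) (at 0)"
  shows "((\<lambda>t. F (\<gamma> t)) has_vector_derivative D / (2 * F (\<gamma> 0))) (at 0)"
proof -
  have Fa: "continuous (at (\<gamma> 0)) F"
    using U Fc continuous_on_eq_continuous_at by blast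
  have cont: "continuous (at 0) (\<lambda>t. F (\<gamma> t))"
    using continuous_at_compose[OF gc Fa] by (simp add: o_def)
  have "(\<gamma> \<longlongrightarrow> \<gamma> 0) (at 0)" using gc by (simp add: continuous_at)
  then have "eventually (\<lambda>t. \<gamma> t \<in> U) (at 0)" using topological_tendstoD U by blast
  then have "eventually (\<lambda>t. t \<noteq> 0 \<longrightarrow> \<gamma> t \<in> U) (nhds 0)"
    by (simp add: eventually_at_filter)
  then have evU: "eventually (\<lambda>t. \<gamma> t \<in> U) (nhds 0)"
    by (rule eventually_mono) (use U in auto)
  have ev: "eventually (\<lambda>t. F (\<gamma> t) ^ 2 = W (\<gamma> t)) (nhds 0)"
    using evU by (rule eventually_mono) (use sq in auto)
  show ?thesis by (rule sqrt_vd[OF D cont ev nz])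
qed

lemma z_derivs:
  fixes x p :: "real^3"
  assumes U: "open U" "(x, p) \<in> U" and zc: "continuous_on U (\<lambda>(y, q). z y q)"
    and sq: "\<forall>(y, q)\<in>U. z y q ^ 2 = w y q" and nz: "z x p \<noteq> 0"
    and DX: "\<And>i. ((\<lambda>t. w (x + t *\<^sub>R axis i 1) p) has_vector_derivative dX i w x p) (at 0)"
    and DP: "\<And>i. ((\<lambda>t. w x (p + t *\<^sub>R axis i 1)) has_vector_derivative dP i w x p) (at 0)"
  shows "dX i z x p = inverse (2 * z x p) * dX i w x p"
    "dP i z x p = inverse (2 * z x p) * dP i w x p"
    "dX i (cnjf z) x p = cnj (inverse (2 * z x p)) * dX i (cnjf w) x p"
    "dP i (cnjf z) x p = cnj (inverse (2 * z x p)) * dP i (cnjf w) x p"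
proof -
  have sq': "\<forall>u\<in>U. (\<lambda>(y, q). z y q) u ^ 2 = (\<lambda>(y, q). w y q) u" using sq by auto
  have hx: "((\<lambda>t. (\<lambda>(y, q). z y q) ((\<lambda>t. (x + t *\<^sub>R axis i 1, p)) t)) has_vector_derivative
      dX i w x p / (2 * (\<lambda>(y, q). z y q) ((\<lambda>t. (x + t *\<^sub>R axis i 1, p)) 0))) (at 0)"
    by (rule path_sqrt[OF U(1) _ _ zc sq']) (use U nz DX[of i] in \<open>auto intro!: continuous_intros\<close>)
  then have hx': "((\<lambda>t. z (x + t *\<^sub>R axis i 1) p) has_vector_derivative dX i w x p / (2 * z x p)) (at 0)"
    by simp
  have hp: "((\<lambda>t. (\<lambda>(y, q). z y q) ((\<lambda>t. (x, p + t *\<^sub>R axis i 1)) t)) has_vector_derivative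
      dP i w x p / (2 * (\<lambda>(y, q). z y q) ((\<lambda>t. (x, p + t *\<^sub>R axis i 1)) 0))) (at 0)"
    by (rule path_sqrt[OF U(1) _ _ zc sq']) (use U nz DP[of i] in \<open>auto intro!: continuous_intros\<close>)
  then have hp': "((\<lambda>t. z x (p + t *\<^sub>R axis i 1)) has_vector_derivative dP i w x p / (2 * z x p)) (at 0)"
    by simp
  show "dX i z x p = inverse (2 * z x p) * dX i w x p"
    by (simp only: dX_intro[where f=z and x=x and p=p and i=i, OF hx'] divide_inverse_commute)
  show "dP i z x p = inverse (2 * z x p) * dP i w x p"
    by (simp only: dP_intro[where f=z and x=x and p=p and i=i, OF hp'] divide_inverse_commute)
  show "dX i (cnjf z) x p = cnj (inverse (2 * z x p)) * dX i (cnjf w) x p"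
    by (simp only: dX_intro[where f="cnjf z" and x=x and p=p and i=i, OF hXc[where f=z and x=x and p=p and i=i, OF hx']] dX_intro[where f="cnjf w" and x=x and p=p and i=i, OF hXc[where f=w and x=x and p=p and i=i, OF DX[of i]]] divide_inverse_commute complex_cnj_mult)
  show "dP i (cnjf z) x p = cnj (inverse (2 * z x p)) * dP i (cnjf w) x p"
    by (simp only: dP_intro[where f="cnjf z" and x=x and p=p and i=i, OF hPc[where f=z and x=x and p=p and i=i, OF hp']] dP_intro[where f="cnjf w" and x=x and p=p and i=i, OF hPc[where f=w and x=x and p=p and i=i, OF DP[of i]]] divide_inverse_commute complex_cnj_mult)
qed

lemma cc_inv: assumes "z \<noteq> 0" shows "inverse (2 * z) * cnj (inverse (2 * z)) = inverse (4 * of_real (cmod z ^ 2))"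
proof -
  have e: "z * cnj z = (complex_of_real (cmod z))^2" by (metis complex_norm_square of_real_power)
  show ?thesis using assms e by (simp add: field_simps)
qed

lemma aux4: "m \<noteq> 0 \<Longrightarrow> inverse (4 * complex_of_real m) * (- 4 * \<i> * complex_of_real m) = - \<i>"
  by (simp add: field_simps)

theorem mainTheorem7:
  fixes x p :: "real^3"
  assumes "onConstraint x p"
  shows "cmod (w0 x p) = NN x p + Jv x p $ 3
    \<and> cmod (w1 x p) = NN x p - Jv x p $ 3
    \<and> DB w0 w1 x p = 0
    \<and> DB w0 (cnjf w1) x p = 0
    \<and> DB w0 (cnjf w0) x p = - 4 * \<i> * complex_of_real (NN x p + Jv x p $ 3)
    \<and> DB w1 (cnjf w1) x p = - 4 * \<i> * complex_of_real (NN x p - Jv x p $ 3)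
    \<and> (\<forall>a b :: complex. a ^ 2 = w0 x p \<longrightarrow> b ^ 2 = w1 x p \<longrightarrow>
           (cmod a ^ 2 + cmod b ^ 2) / 2 = NN x p \<and> (cmod a ^ 2 - cmod b ^ 2) / 2 = Jv x p $ 3)
    \<and> (\<forall>U z0 z1. open U \<longrightarrow> (x, p) \<in> U \<longrightarrow>
           continuous_on U (\<lambda>(y, q). z0 y q) \<longrightarrow> continuous_on U (\<lambda>(y, q). z1 y q) \<longrightarrow>
           (\<forall>(y, q)\<in>U. z0 y q ^ 2 = w0 y q \<and> z1 y q ^ 2 = w1 y q) \<longrightarrow>
           w0 x p \<noteq> 0 \<longrightarrow> w1 x p \<noteq> 0 \<longrightarrow>
           DB z0 (cnjf z0) x p = - \<i> \<and> DB z1 (cnjf z1) x p = - \<i> \<and>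
           DB z0 (cnjf z1) x p = 0 \<and> DB z1 (cnjf z0) x p = 0 \<and>
           DB z0 z0 x p = 0 \<and> DB z1 z1 x p = 0 \<and> DB z0 z1 x p = 0 \<and> DB z1 z0 x p = 0)"
proof -
  have xp0: "x \<bullet> p = 0" and n2: "norm x ^ 2 = norm p ^ 2" and cr: "cross3 x p \<noteq> 0"
    using assms by (auto simp: onConstraint_def)
  have xnz: "x \<noteq> 0" using cr by auto
  have pnz: "p \<noteq> 0" using cr by auto
  have np: "norm p = norm x" using power2_eq_imp_eq[OF n2[symmetric]] by simp
  have xp: "x$1*p$1+x$2*p$2+x$3*p$3 = 0" using xp0 by (simp add: inner_vec_def sum_3)
  have nx: "norm x ^2 = x$1^2+x$2^2+x$3^2"
    unfolding power2_norm_eq_inner by (simp add: inner_vec_def sum_3 power2_eq_square)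
  have npp: "norm x ^2 = p$1^2+p$2^2+p$3^2"
    unfolding np[symmetric] power2_norm_eq_inner by (simp add: inner_vec_def sum_3 power2_eq_square)
  note br = bracks[OF xnz pnz np xp nx npp]
  have NN: "NN x p = norm x ^ 2"
  proof -
    have "norm (cross3 x p) ^ 2 = (norm x ^ 2) ^ 2"
      using norm_cross[of x p] xp0 np by (simp add: power2_eq_square)
    then show ?thesis unfolding NN_def Jv_def
      by (rule power2_eq_imp_eq) auto
  qed
  define J where "J = x$1*p$2 - x$2*p$1"
  have J3: "Jv x p $ 3 = J" by (simp add: Jv_def cross3_def J_def)
  have Jle: "\<bar>J\<bar> \<le> norm x ^ 2"
    using component_le_norm_cart[of "Jv x p" 3] J3 NN by (simp add: NN_def)
  have cm0: "cmod (w0 x p) = NN x p + Jv x p $ 3"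
  proof -
    have "(norm x * x$1 + norm p * p$2)^2 + (norm p * p$1 - norm x * x$2)^2 = (norm x ^ 2 + J)^2"
      unfolding np J_def using nx npp xp by algebra
    then show ?thesis unfolding w0_eq complex_norm NN J3 using Jle by simp
  qed
  have cm1: "cmod (w1 x p) = NN x p - Jv x p $ 3"
  proof -
    have "(norm p * p$2 - norm x * x$1)^2 + (- (norm x * x$2 + norm p * p$1))^2 = (norm x ^ 2 - J)^2"
      unfolding np J_def using nx npp xp by algebra
    then show ?thesis unfolding w1_eq complex_norm NN J3 using Jle by simp
  qed
  have d00: "DB w0 (cnjf w0) x p = - 4 * \<i> * complex_of_real (NN x p + Jv x p $ 3)"
    using br(4) by (simp add: NN J3 J_def)
  have d11: "DB w1 (cnjf w1) x p = - 4 * \<i> * complex_of_real (NN x p - Jv x p $ 3)"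
    using br(5) by (simp add: NN J3 J_def)
  have sq: "\<forall>a b :: complex. a ^ 2 = w0 x p \<longrightarrow> b ^ 2 = w1 x p \<longrightarrow>
           (cmod a ^ 2 + cmod b ^ 2) / 2 = NN x p \<and> (cmod a ^ 2 - cmod b ^ 2) / 2 = Jv x p $ 3"
  proof (intro allI impI)
    fix a b :: complex assume a: "a ^ 2 = w0 x p" and b: "b ^ 2 = w1 x p"
    have "cmod a ^ 2 = cmod (w0 x p)" using a by (metis norm_power)
    moreover have "cmod b ^ 2 = cmod (w1 x p)" using b by (metis norm_power)
    ultimately show "(cmod a ^ 2 + cmod b ^ 2) / 2 = NN x p \<and> (cmod a ^ 2 - cmod b ^ 2) / 2 = Jv x p $ 3"
      using cm0 cm1 by simp
  qed
  have w0X: "((\<lambda>t. w0 (x + t *\<^sub>R axis i 1) p) has_vector_derivative dX i w0 x p) (at 0)" for i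
    using hX_w0[OF xnz] dX_intro[OF hX_w0[OF xnz]] by simp
  have w0P: "((\<lambda>t. w0 x (p + t *\<^sub>R axis i 1)) has_vector_derivative dP i w0 x p) (at 0)" for i
    using hP_w0[OF pnz] dP_intro[OF hP_w0[OF pnz]] by simp
  have w1X: "((\<lambda>t. w1 (x + t *\<^sub>R axis i 1) p) has_vector_derivative dX i w1 x p) (at 0)" for i
    using hX_w1[OF xnz] dX_intro[OF hX_w1[OF xnz]] by simp
  have w1P: "((\<lambda>t. w1 x (p + t *\<^sub>R axis i 1)) has_vector_derivative dP i w1 x p) (at 0)" for i
    using hP_w1[OF pnz] dP_intro[OF hP_w1[OF pnz]] by simp
  have zpart: "DB z0 (cnjf z0) x p = - \<i> \<and> DB z1 (cnjf z1) x p = - \<i> \<and>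
           DB z0 (cnjf z1) x p = 0 \<and> DB z1 (cnjf z0) x p = 0 \<and>
           DB z0 z0 x p = 0 \<and> DB z1 z1 x p = 0 \<and> DB z0 z1 x p = 0 \<and> DB z1 z0 x p = 0"
    if U: "open U" "(x, p) \<in> U" and c0: "continuous_on U (\<lambda>(y, q). z0 y q)"
      and c1: "continuous_on U (\<lambda>(y, q). z1 y q)"
      and sqs: "\<forall>(y, q)\<in>U. z0 y q ^ 2 = w0 y q \<and> z1 y q ^ 2 = w1 y q"
      and n0: "w0 x p \<noteq> 0" and n1: "w1 x p \<noteq> 0" for U z0 z1
  proof -
    have s0: "\<forall>(y, q)\<in>U. z0 y q ^ 2 = w0 y q" and s1: "\<forall>(y, q)\<in>U. z1 y q ^ 2 = w1 y q"
      using sqs by auto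
    have z0sq: "z0 x p ^ 2 = w0 x p" and z1sq: "z1 x p ^ 2 = w1 x p" using sqs U by auto
    have z0n: "z0 x p \<noteq> 0" using z0sq n0 by auto
    have z1n: "z1 x p \<noteq> 0" using z1sq n1 by auto
    note D0 = z_derivs[OF U c0 s0 z0n w0X w0P]
    note D1 = z_derivs[OF U c1 s1 z1n w1X w1P]
    define k0 where "k0 = inverse (2 * z0 x p)"
    define k1 where "k1 = inverse (2 * z1 x p)"
    note D0' = D0[folded k0_def] and D1' = D1[folded k1_def]
    have m0: "cmod (z0 x p) ^ 2 = NN x p + Jv x p $ 3" using z0sq cm0 by (metis norm_power)
    have m1: "cmod (z1 x p) ^ 2 = NN x p - Jv x p $ 3" using z1sq cm1 by (metis norm_power)
    have m0n: "NN x p + Jv x p $ 3 \<noteq> 0" using cm0 n0 by auto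
    have m1n: "NN x p - Jv x p $ 3 \<noteq> 0" using cm1 n1 by auto
    have "DB z0 (cnjf z0) x p = k0 * cnj k0 * DB w0 (cnjf w0) x p"
      by (rule DB_scale) (use D0' in auto)
    also have "\<dots> = - \<i>" unfolding k0_def cc_inv[OF z0n] d00 m0
      by (rule aux4[OF m0n])
    finally have r1: "DB z0 (cnjf z0) x p = - \<i>" .
    have "DB z1 (cnjf z1) x p = k1 * cnj k1 * DB w1 (cnjf w1) x p"
      by (rule DB_scale) (use D1' in auto)
    also have "\<dots> = - \<i>" unfolding k1_def cc_inv[OF z1n] d11 m1
      by (rule aux4[OF m1n])
    finally have r2: "DB z1 (cnjf z1) x p = - \<i>" .
    have r3: "DB z0 (cnjf z1) x p = k0 * cnj k1 * DB w0 (cnjf w1) x p"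
      by (rule DB_scale) (use D0' D1' in auto)
    have r4: "DB z1 (cnjf z0) x p = k1 * cnj k0 * DB w1 (cnjf w0) x p"
      by (rule DB_scale) (use D0' D1' in auto)
    have r5: "DB z0 z0 x p = k0 * k0 * DB w0 w0 x p"
      by (rule DB_scale) (use D0' in auto)
    have r6: "DB z1 z1 x p = k1 * k1 * DB w1 w1 x p"
      by (rule DB_scale) (use D1' in auto)
    have r7: "DB z0 z1 x p = k0 * k1 * DB w0 w1 x p"
      by (rule DB_scale) (use D0' D1' in auto)
    have r8: "DB z1 z0 x p = k1 * k0 * DB w1 w0 x p"
      by (rule DB_scale) (use D0' D1' in auto)
    show ?thesis using r1 r2 r3 r4 r5 r6 r7 r8 br by simp
  qed
  show ?thesis using cm0 cm1 br(1,2) d00 d11 sq zpart by blast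
qed

end
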